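(* Let $n,p,q,c,d$ be nonnegative integers. Then \[ \begin{split} &\sum_{k=0}^n \binom{p+k}{p}\binom{q+n-k}{q}\binom{k}{c}\binom{n-k}{d}H_{p+k}H_{q+n-k}\\ &= \binom{n+p+q+1}{n-c-d}\binom{p+c}{c}\binom{q+d}{d} \Bigl[H_{p+q+c+d+1}^{(2)}-H_{n+p+q+1}^{(2)}\\ &\qquad +(H_{n+p+q+1}-H_{p+q+c+d+1}+H_{p+c})(H_{n+p+q+1}-H_{p+q+c+d+1}+H_{q+d})\Bigr]. \end{split} \]
   Context: For a nonnegative integer $N$ and $m\in\{1,2\}$, $H_N^{(m)}=\sum_{j=1}^N \frac{1}{j^m}$ (empty sum $=0$), and $H_N=H_N^{(1)}$. For integers $r$ and $j$, $\binom{r}{j}=\frac{r(r-1)\cdots(r-j+1)}{j!}$ if $j\ge 0$ and $\binom{r}{j}=0$ if $j<0$. *)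

theory Defs
  imports Complex_Main
begin

definition H1 :: "nat \<Rightarrow> real" where
  "H1 N = (\<Sum>j=1..N. 1 / real j)"

definition H2 :: "nat \<Rightarrow> real" where
  "H2 N = (\<Sum>j=1..N. 1 / (real j)^2)"

definition binomz :: "nat \<Rightarrow> int \<Rightarrow> real" where
  "binomz r j = (if j < 0 then 0 else real (r choose nat j))"

end

theory Submission
  imports Defs "HOL-Computational_Algebra.Formal_Power_Series"
begin

definition UU :: "nat \<Rightarrow> real fps" where
  "UU a = Abs_fps (\<lambda>i. real ((a+i) choose i))"

definition Lg :: "real fps" where
  "Lg = Abs_fps (\<lambda>i. if i = 0 then 0 else 1 / real i)"

lemma H1_Suc: "H1 (Suc n) = H1 n + 1 / real (Suc n)"
  unfolding H1_def by simp

lemma H2_Suc: "H2 (Suc n) = H2 n + 1 / (real (Suc n))^2"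
  unfolding H2_def by simp

lemma H1_0[simp]: "H1 0 = 0" unfolding H1_def by simp
lemma H2_0[simp]: "H2 0 = 0" unfolding H2_def by simp

lemma bin1: "(Suc (a+m) choose Suc m) * Suc m = (Suc (a+m) choose m) * Suc a"
  by (metis Suc_times_binomial_add add.commute mult.commute)

lemma bin1r: "real (Suc (a+m) choose Suc m) * real (Suc m) = real (Suc (a+m) choose m) * real (Suc a)"
  using bin1[of a m] by (metis of_nat_mult)

lemma bin2r: "real (Suc (Suc (a+m)) choose Suc m) * real (Suc m) = real (Suc (a+m) choose m) * real (Suc (Suc (a+m)))"
  using Suc_times_binomial_eq[of "Suc (a+m)" m] by (metis of_nat_mult mult.commute)

lemma U0_mult_nth: "fps_nth (UU 0 * f) m = (\<Sum>i\<le>m. fps_nth f i)"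
proof -
  have "fps_nth (UU 0 * f) m = fps_nth (f * UU 0) m" by (simp add: mult.commute)
  also have "\<dots> = (\<Sum>i=0..m. fps_nth f i)" by (simp add: fps_mult_nth UU_def)
  finally show ?thesis by (simp add: atLeast0AtMost)
qed

lemma U_Suc: "UU (Suc a) = UU a * UU 0"
proof (rule fps_ext)
  fix m
  have "fps_nth (UU a * UU 0) m = fps_nth (UU 0 * UU a) m" by (simp add: mult.commute)
  also have "\<dots> = (\<Sum>i\<le>m. real ((a+i) choose i))" unfolding U0_mult_nth by (simp add: UU_def)
  also have "\<dots> = real (Suc (a+m) choose m)" using sum_choose_lower[of a m]
    by (metis of_nat_sum)
  finally show "fps_nth (UU (Suc a)) m = fps_nth (UU a * UU 0) m" by (simp add: UU_def)
qed

lemma U_add: "UU (a+b+1) = UU a * UU b"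
proof (induction b)
  case 0 then show ?case using U_Suc[of a] by simp
next
  case (Suc b)
  have "UU (a + Suc b + 1) = UU (a+b+1) * UU 0" using U_Suc[of "a+b+1"] by simp
  also have "\<dots> = UU a * (UU b * UU 0)" using Suc by (simp add: mult.assoc)
  also have "\<dots> = UU a * UU (Suc b)" using U_Suc[of b] by simp
  finally show ?case .
qed

lemma Lg_sum: "(\<Sum>i\<le>m. fps_nth Lg i) = H1 m"
  by (induction m) (auto simp: Lg_def H1_Suc)

lemma alg1: fixes B x h u v w :: real assumes "u > 0" "v > 0" "w > 0" and w: "w = u+v"
  shows "B*(x - (h+1/u)) + B*u/v*(x - h) = B*w/v*(x + 1/w - (h + 1/u))"
proof -
  have "(B*(x - (h+1/u)) + B*u/v*(x - h)) * (u*v*w) = (B*w/v*(x + 1/w - (h + 1/u)))*(u*v*w)"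
    using assms(1-3) apply (simp add: field_simps) unfolding w by (simp add: algebra_simps)
  moreover have "u*v*w \<noteq> 0" using assms(1-3) by simp
  ultimately show ?thesis by (metis mult_cancel_right)
qed

lemma sum1: "(\<Sum>t\<le>m. real((a+t) choose t)*(H1(a+t)-H1 a))
   = real((Suc a+m) choose m)*(H1(Suc a+m)-H1(Suc a))"
proof (induction m)
  case 0 then show ?case by (simp add: H1_Suc)
next
  case (Suc m)
  define B where "B = real (Suc (a+m) choose m)"
  define x where "x = H1 (Suc (a+m))"
  have r1: "real (Suc (a+m) choose Suc m) = B * (real a + 1) / (real m + 1)"
    using bin1r[of a m] unfolding B_def by (simp add: field_simps)
  have r2: "real (Suc a + Suc m choose Suc m) = B * (real a + real m + 2) / (real m + 1)"
    using bin2r[of a m] unfolding B_def by (simp add: field_simps)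
  have e1: "H1 (Suc a + Suc m) = x + 1/(real a + real m + 2)"
    using H1_Suc[of "Suc (a+m)"] unfolding x_def by simp
  have e2: "H1 (Suc a) = H1 a + 1/(real a + 1)" using H1_Suc[of a] by simp
  have e3: "Suc a + m = Suc (a+m)" by simp
  have "(\<Sum>t\<le>Suc m. real((a+t) choose t)*(H1(a+t)-H1 a))
     = B*(x - H1(Suc a)) + real (Suc (a+m) choose Suc m) * (x - H1 a)"
    using Suc unfolding B_def x_def e3 by simp
  also have "\<dots> = real((Suc a+Suc m) choose Suc m)*(H1(Suc a+Suc m)-H1(Suc a))"
    unfolding r1 r2 e1 e2
    by (rule alg1) auto
  finally show ?case .
qed

lemma Lg_nth0[simp]: "fps_nth Lg 0 = 0" by (simp add: Lg_def)

lemma L1: "UU a * Lg = Abs_fps (\<lambda>m. real((a+m) choose m) * (H1(a+m) - H1 a))"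
proof (induction a)
  case 0
  show ?case by (rule fps_ext) (simp add: U0_mult_nth Lg_sum)
next
  case (Suc a)
  have "UU (Suc a) * Lg = UU 0 * (UU a * Lg)" by (simp add: U_Suc mult_ac)
  then show ?case using sum1[of a] by (intro fps_ext) (simp add: U0_mult_nth Suc)
qed

lemma deriv_Lg: "fps_deriv Lg = UU 0"
  by (rule fps_ext) (simp add: Lg_def UU_def del: of_nat_Suc)

lemma Lg2_nth0: "fps_nth (Lg^2) 0 = 0"
  by (simp add: power2_eq_square fps_mult_nth)

lemma Lg2_nth: "fps_nth (Lg^2) (Suc m) = 2 * H1 m / real (Suc m)"
proof -
  have "fps_deriv (Lg^2) = fps_const 2 * (UU 0 * Lg)"
    by (simp add: fps_deriv_power deriv_Lg mult_ac)
  then have "fps_nth (fps_deriv (Lg^2)) m = 2 * H1 m"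
    using L1[of 0] by simp
  then have "real (Suc m) * fps_nth (Lg^2) (Suc m) = 2 * H1 m"
    by (simp add: fps_deriv_nth del: of_nat_Suc)
  then show ?thesis by (simp add: field_simps del: of_nat_Suc)
qed

lemma Lg2_sum: "(\<Sum>i\<le>m. fps_nth (Lg^2) i) = (H1 m)^2 - H2 m"
proof (induction m)
  case 0 then show ?case by (simp add: Lg2_nth0)
next
  case (Suc m)
  have "(\<Sum>i\<le>Suc m. fps_nth (Lg^2) i) = (H1 m)^2 - H2 m + 2 * H1 m / real (Suc m)"
    using Suc by (simp add: Lg2_nth)
  also have "\<dots> = (H1 (Suc m))^2 - H2 (Suc m)"
  proof -
    have *: "h^2 - h2 + 2*h/v = (h + 1/v)^2 - (h2 + 1/v^2)" if "v > 0" for h h2 v :: real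
      using that by (simp add: field_simps power2_eq_square)
    show ?thesis unfolding H1_Suc H2_Suc by (rule *) simp
  qed
  finally show ?case .
qed

lemma alg2: fixes B x h y h2 u v w :: real assumes "u > 0" "v > 0" "w > 0" and w: "w = u+v"
  shows "B*((x-h-1/u)^2 - (y-h2-1/u^2)) + B*u/v*((x-h)^2 - (y-h2))
       = B*w/v*((x+1/w-(h+1/u))^2 - (y+1/w^2-(h2+1/u^2)))"
proof -
  have "(B*((x-h-1/u)^2 - (y-h2-1/u^2)) + B*u/v*((x-h)^2 - (y-h2))) * (u^2*v*w^2)
      = (B*w/v*((x+1/w-(h+1/u))^2 - (y+1/w^2-(h2+1/u^2)))) * (u^2*v*w^2)"
    using assms(1-3) apply (simp add: field_simps power2_eq_square) unfolding w by (simp add: algebra_simps)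
  moreover have "u^2*v*w^2 \<noteq> 0" using assms(1-3) by simp
  ultimately show ?thesis by (metis mult_cancel_right)
qed

lemma sum2: "(\<Sum>t\<le>m. real((a+t) choose t)*((H1(a+t)-H1 a)^2 - (H2(a+t)-H2 a)))
   = real((Suc a+m) choose m)*((H1(Suc a+m)-H1(Suc a))^2 - (H2(Suc a+m)-H2(Suc a)))"
proof (induction m)
  case 0 then show ?case by (simp add: H1_Suc H2_Suc)
next
  case (Suc m)
  define B where "B = real (Suc (a+m) choose m)"
  define x where "x = H1 (Suc (a+m))"
  define y where "y = H2 (Suc (a+m))"
  have r1: "real (Suc (a+m) choose Suc m) = B * (real a + 1) / (real m + 1)"
    using bin1r[of a m] unfolding B_def by (simp add: field_simps)
  have r2: "real (Suc a + Suc m choose Suc m) = B * (real a + real m + 2) / (real m + 1)"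
    using bin2r[of a m] unfolding B_def by (simp add: field_simps)
  have e1: "H1 (Suc a + Suc m) = x + 1/(real a + real m + 2)"
    using H1_Suc[of "Suc (a+m)"] unfolding x_def by simp
  have e2: "H1 (Suc a) = H1 a + 1/(real a + 1)" using H1_Suc[of a] by simp
  have f1: "H2 (Suc a + Suc m) = y + 1/(real a + real m + 2)^2"
    using H2_Suc[of "Suc (a+m)"] unfolding y_def by simp
  have f2: "H2 (Suc a) = H2 a + 1/(real a + 1)^2" using H2_Suc[of a] by simp
  have e3: "Suc a + m = Suc (a+m)" by simp
  have "(\<Sum>t\<le>Suc m. real((a+t) choose t)*((H1(a+t)-H1 a)^2 - (H2(a+t)-H2 a)))
     = B*((x - H1(Suc a))^2 - (y - H2(Suc a))) + real (Suc (a+m) choose Suc m) * ((x - H1 a)^2 - (y - H2 a))"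
    using Suc unfolding B_def x_def y_def e3 by simp
  also have "\<dots> = real((Suc a+Suc m) choose Suc m)*((H1(Suc a+Suc m)-H1(Suc a))^2 - (H2(Suc a+Suc m)-H2(Suc a)))"
    unfolding r1 r2 e1 e2 f1 f2 diff_diff_eq
    by (rule alg2[unfolded diff_diff_eq]) auto
  finally show ?case .
qed

lemma L2: "UU a * Lg^2 = Abs_fps (\<lambda>m. real((a+m) choose m) * ((H1(a+m) - H1 a)^2 - (H2(a+m) - H2 a)))"
proof (induction a)
  case 0
  show ?case by (rule fps_ext) (simp add: U0_mult_nth Lg2_sum)
next
  case (Suc a)
  have "UU (Suc a) * Lg^2 = UU 0 * (UU a * Lg^2)" by (simp add: U_Suc mult_ac)
  then show ?case using sum2[of a] by (intro fps_ext) (simp add: U0_mult_nth Suc)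
qed

lemma AA_eq: "Abs_fps (\<lambda>i. real((P+i) choose i) * H1(P+i)) = UU P * (fps_const (H1 P) + Lg)"
proof (rule fps_ext)
  fix i
  have "fps_nth (UU P * (fps_const (H1 P) + Lg)) i = fps_nth (UU P * fps_const (H1 P)) i + fps_nth (UU P * Lg) i"
    by (simp add: distrib_left)
  also have "\<dots> = real((P+i) choose i) * H1 P + real((P+i) choose i) * (H1(P+i) - H1 P)"
    unfolding fps_add_nth fps_mult_right_const_nth L1 by (simp add: UU_def)
  finally show "fps_nth (Abs_fps (\<lambda>i. real((P+i) choose i) * H1(P+i))) i = fps_nth (UU P * (fps_const (H1 P) + Lg)) i"
    by (simp add: algebra_simps)
qed

lemma sq_expand: "(fps_const c1 + Lg) * (fps_const c2 + Lg) = fps_const (c1*c2) + fps_const (c1+c2) * Lg + Lg^2"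
proof -
  have "(fps_const c1 + Lg) * (fps_const c2 + Lg) = fps_const c1 * fps_const c2 + fps_const c1 * Lg + fps_const c2 * Lg + Lg*Lg"
    by (simp add: algebra_simps del: fps_const_mult)
  also have "\<dots> = fps_const (c1*c2) + fps_const (c1+c2) * Lg + Lg^2"
    by (simp add: power2_eq_square distrib_right flip: fps_const_add)
  finally show ?thesis .
qed

lemma core:
  fixes P Q m :: nat
  shows "(\<Sum>i=0..m. real((P+i) choose P)*real((Q+(m-i)) choose Q)*H1(P+i)*H1(Q+(m-i)))
   = real((m+P+Q+1) choose m) * (H2(P+Q+1) - H2(m+P+Q+1)
      + (H1(m+P+Q+1)-H1(P+Q+1)+H1 P)*(H1(m+P+Q+1)-H1(P+Q+1)+H1 Q))"
proof -
  define s where "s = P+Q+1"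
  have us: "UU s = UU P * UU Q" unfolding s_def by (rule U_add)
  have sym: "real((R+i) choose R) = real((R+i) choose i)" for R i :: nat
    using binomial_symmetric[of i "R+i"] by simp
  have "(\<Sum>i=0..m. real((P+i) choose P)*real((Q+(m-i)) choose Q)*H1(P+i)*H1(Q+(m-i)))
      = (\<Sum>i=0..m. (real((P+i) choose i) * H1(P+i)) * (real((Q+(m-i)) choose (m-i)) * H1(Q+(m-i))))"
    apply (rule sum.cong[OF refl])
    apply (subst sym[of Q])
    apply (subst sym[of P])
    by (simp add: mult_ac)
  also have "\<dots> = fps_nth (Abs_fps (\<lambda>i. real((P+i) choose i) * H1(P+i)) * Abs_fps (\<lambda>i. real((Q+i) choose i) * H1(Q+i))) m"
    by (simp add: fps_mult_nth)
  also have "\<dots> = fps_nth (UU s * ((fps_const (H1 P) + Lg) * (fps_const (H1 Q) + Lg))) m"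
    unfolding AA_eq us by (simp only: mult_ac)
  also have "\<dots> = fps_nth (UU s * fps_const (H1 P * H1 Q)) m + fps_nth (fps_const (H1 P + H1 Q) * (UU s * Lg)) m
       + fps_nth (UU s * Lg^2) m"
    unfolding sq_expand by (simp add: distrib_left mult_ac)
  also have "\<dots> = real((s+m) choose m) * (H1 P * H1 Q) + (H1 P + H1 Q) * (real((s+m) choose m) * (H1(s+m) - H1 s))
       + real((s+m) choose m) * ((H1(s+m) - H1 s)^2 - (H2(s+m) - H2 s))"
    by (simp only: fps_mult_left_const_nth fps_mult_right_const_nth L1 L2) (simp add: UU_def)
  also have "\<dots> = real((m+P+Q+1) choose m) * (H2(P+Q+1) - H2(m+P+Q+1)
      + (H1(m+P+Q+1)-H1(P+Q+1)+H1 P)*(H1(m+P+Q+1)-H1(P+Q+1)+H1 Q))"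
  proof -
    have "s+m = m+P+Q+1" "s = P+Q+1" unfolding s_def by simp_all
    have g: "C*(a*b) + (a+b)*(C*(x-y)) + C*((x-y)^2 - (z-w)) = C*(w - z + (x-y+a)*(x-y+b))"
      for C a b x y z w :: real by (simp add: algebra_simps power2_eq_square)
    show ?thesis unfolding \<open>s+m = m+P+Q+1\<close> unfolding \<open>s = P+Q+1\<close> by (rule g)
  qed
  finally show ?thesis .
qed

lemma binmul: "((p+c+i) choose p) * ((c+i) choose c) = ((p+c) choose c) * ((p+c+i) choose (p+c))"
proof -
  have A: "(p+c+i) choose p = (p+c+i) choose (c+i)"
    using binomial_symmetric[of p "p+c+i"] by (simp add: add.assoc)
  have B: "((p+c+i) choose (c+i)) * ((c+i) choose c) = ((p+c+i) choose c) * ((p+i) choose i)"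
    using choose_mult[of c "c+i" "p+c+i"] by simp
  have C: "((p+c+i) choose (p+c)) * ((p+c) choose c) = ((p+c+i) choose c) * ((p+i) choose p)"
    using choose_mult[of c "p+c" "p+c+i"] by simp
  have D: "(p+i) choose i = (p+i) choose p"
    using binomial_symmetric[of i "p+i"] by simp
  show ?thesis using A B C D by (simp add: mult.commute)
qed
lemma binmulr: "real ((p+c+i) choose p) * real ((c+i) choose c) = real ((p+c) choose c) * real ((p+c+i) choose (p+c))"
  using binmul[of p c i] by (metis of_nat_mult)

theorem mainTheorem5:
  fixes n p q c d :: nat
  shows "(\<Sum>k=0..n. real ((p+k) choose p) * real ((q+n-k) choose q)
            * real (k choose c) * real ((n-k) choose d) * H1 (p+k) * H1 (q+n-k))
       = binomz (n+p+q+1) (int n - int c - int d) * real ((p+c) choose c) * real ((q+d) choose d)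
         * (H2 (p+q+c+d+1) - H2 (n+p+q+1)
            + (H1 (n+p+q+1) - H1 (p+q+c+d+1) + H1 (p+c))
              * (H1 (n+p+q+1) - H1 (p+q+c+d+1) + H1 (q+d)))"
proof -
  define f where "f k = real ((p+k) choose p) * real ((q+n-k) choose q)
            * real (k choose c) * real ((n-k) choose d) * H1 (p+k) * H1 (q+n-k)" for k
  have fz: "f k = 0" if "k < c \<or> n - k < d" for k
    using that unfolding f_def by auto
  show ?thesis
  proof (cases "c + d \<le> n")
    case False
    have b: "binomz (n+p+q+1) (int n - int c - int d) = 0" unfolding binomz_def using False by simp
    have "(\<Sum>k=0..n. f k) = 0"
      by (rule sum.neutral) (use False in \<open>auto intro!: fz\<close>)
    then show ?thesis unfolding f_def b by simp
  next
    case True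
    define m where "m = n - c - d"
    have nm: "n = c + d + m" unfolding m_def using True by simp
    have "(\<Sum>k=0..n. f k) = (\<Sum>k=c..c+m. f k)"
      by (rule sum.mono_neutral_right) (auto simp: nm intro!: fz)
    also have "\<dots> = (\<Sum>i=0..m. f (i + c))"
      using sum.shift_bounds_cl_nat_ivl[of f 0 c m] by (simp add: add.commute)
    also have "\<dots> = (\<Sum>i=0..m. real ((p+c) choose c) * real ((q+d) choose d) *
        (real(((p+c)+i) choose (p+c))*real(((q+d)+(m-i)) choose (q+d))*H1((p+c)+i)*H1((q+d)+(m-i))))"
    proof (rule sum.cong[OF refl])
      fix i assume "i \<in> {0..m}"
      then have im: "i \<le> m" by simp
      have e1: "p + (i + c) = p + c + i" "q + n - (i + c) = q + d + (m - i)" "n - (i+c) = d + (m - i)"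
        using im unfolding nm by simp_all
      note b1 = binmulr[of p c i]
      note b2 = binmulr[of q d "m-i"]
      show "f (i + c) = real ((p+c) choose c) * real ((q+d) choose d) *
        (real(((p+c)+i) choose (p+c))*real(((q+d)+(m-i)) choose (q+d))*H1((p+c)+i)*H1((q+d)+(m-i)))"
        unfolding f_def e1 unfolding add.commute[of i c]
        using b1 b2 by (simp add: algebra_simps)
    qed
    also have "\<dots> = real ((p+c) choose c) * real ((q+d) choose d) *
        (\<Sum>i=0..m. real(((p+c)+i) choose (p+c))*real(((q+d)+(m-i)) choose (q+d))*H1((p+c)+i)*H1((q+d)+(m-i)))"
      by (simp add: sum_distrib_left)
    also have "\<dots> = real ((p+c) choose c) * real ((q+d) choose d) *
        (real((m+(p+c)+(q+d)+1) choose m) * (H2((p+c)+(q+d)+1) - H2(m+(p+c)+(q+d)+1)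
      + (H1(m+(p+c)+(q+d)+1)-H1((p+c)+(q+d)+1)+H1 (p+c))*(H1(m+(p+c)+(q+d)+1)-H1((p+c)+(q+d)+1)+H1 (q+d))))"
      by (simp only: core)
    also have "\<dots> = binomz (n+p+q+1) (int n - int c - int d) * real ((p+c) choose c) * real ((q+d) choose d)
         * (H2 (p+q+c+d+1) - H2 (n+p+q+1)
            + (H1 (n+p+q+1) - H1 (p+q+c+d+1) + H1 (p+c))
              * (H1 (n+p+q+1) - H1 (p+q+c+d+1) + H1 (q+d)))"
    proof -
      have g1: "m+(p+c)+(q+d)+1 = n+p+q+1" "(p+c)+(q+d)+1 = p+q+c+d+1" unfolding nm by simp_all
      have g2: "binomz (n+p+q+1) (int n - int c - int d) = real ((n+p+q+1) choose m)"
        unfolding binomz_def nm by simp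
      show ?thesis unfolding g1 g2 by (simp only: mult_ac)
    qed
    finally show ?thesis unfolding f_def .
  qed
qed

end
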